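(* Let $\pi\in\mathcal{S}_n$ be a Schröder permutation, and let $\mathcal{E}^*(\pi)$ be the set obtained from $\mathcal{E}(\pi)$ by replacing every element $(i,j)\in\mathcal{E}_1(\pi)$ by $(i-1,j-1)$. Then $\mathcal{E}^*(\pi)$ is a ranked essential set with all ranks equal to $0$: there exists a permutation $\sigma\in\mathcal{S}_n$ with $\mathcal{E}(\sigma)=\mathcal{E}^*(\pi)$ and $\rho_\sigma(i,j)=0$ for every $(i,j)\in\mathcal{E}(\sigma)$; in particular, $\sigma$ avoids $132$.
   Context: A permutation $\pi$ avoids a pattern $\tau\in\mathcal{S}_k$ if no subsequence $\pi_{i_1}\cdots\pi_{i_k}$ ($i_1<\dots<i_k$) is in the same relative order as $\tau$. A Schröder permutation is a permutation avoiding both $1243$ and $2143$. Represent $\pi\in\mathcal{S}_n$ by an $n\times n$ array, rows $i$ numbered top to bottom, columns $j$ left to right, with a dot in square $(i,\pi_i)$. The diagram $D(\pi)$ is the set of squares $(i,j)$ with $\pi_i>j$ and $\pi^{-1}(j)>i$. The essential set $\mathcal{E}(\pi)$ is the set of $(i,j)\in D(\pi)$ with $(i+1,j)\notin D(\pi)$ and $(i,j+1)\notin D(\pi)$ (squares outside the array count as not in $D(\pi)$). The rank (with respect to $\pi$) of a square $(i,j)$ is $\rho_\pi(i,j)=\#\{k<i:\pi_k<j\}$, and $\mathcal{E}_r(\pi)=\{(i,j)\in\mathcal{E}(\pi):\rho_\pi(i,j)=r\}$. *)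

theory Defs
  imports "HOL-Combinatorics.Permutations"
begin

text \<open>Permutations of [n] = {1..n} are functions \<pi> with \<pi> permutes {1..n}.
  A pattern of length k is given as a list of the values \<tau>_1 ... \<tau>_k.\<close>

definition contains_pattern :: "nat \<Rightarrow> (nat \<Rightarrow> nat) \<Rightarrow> nat list \<Rightarrow> bool" where
  "contains_pattern n \<pi> \<tau> \<longleftrightarrow>
     (\<exists>idx :: nat \<Rightarrow> nat.
        strict_mono_on {1..length \<tau>} idx \<and> idx ` {1..length \<tau>} \<subseteq> {1..n} \<and>
        (\<forall>a\<in>{1..length \<tau>}. \<forall>b\<in>{1..length \<tau>}.
            \<pi> (idx a) < \<pi> (idx b) \<longleftrightarrow> \<tau> ! (a - 1) < \<tau> ! (b - 1)))"

definition avoids :: "nat \<Rightarrow> (nat \<Rightarrow> nat) \<Rightarrow> nat list \<Rightarrow> bool" where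
  "avoids n \<pi> \<tau> \<longleftrightarrow> \<not> contains_pattern n \<pi> \<tau>"

definition schroeder :: "nat \<Rightarrow> (nat \<Rightarrow> nat) \<Rightarrow> bool" where
  "schroeder n \<pi> \<longleftrightarrow> \<pi> permutes {1..n} \<and> avoids n \<pi> [1,2,4,3] \<and> avoids n \<pi> [2,1,4,3]"

text \<open>Diagram: squares (i,j) (row i, column j) with \<pi>_i > j and \<pi>^{-1}(j) > i.\<close>
definition diagram :: "nat \<Rightarrow> (nat \<Rightarrow> nat) \<Rightarrow> (nat \<times> nat) set" where
  "diagram n \<pi> = {(i, j). i \<in> {1..n} \<and> j \<in> {1..n} \<and> \<pi> i > j \<and> inv \<pi> j > i}"

definition essential_set :: "nat \<Rightarrow> (nat \<Rightarrow> nat) \<Rightarrow> (nat \<times> nat) set" where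
  "essential_set n \<pi> = {(i, j). (i, j) \<in> diagram n \<pi> \<and>
       (i + 1, j) \<notin> diagram n \<pi> \<and> (i, j + 1) \<notin> diagram n \<pi>}"

definition rank :: "(nat \<Rightarrow> nat) \<Rightarrow> nat \<Rightarrow> nat \<Rightarrow> nat" where
  "rank \<pi> i j = card {k \<in> {1..<i}. \<pi> k < j}"

definition essential_star :: "nat \<Rightarrow> (nat \<Rightarrow> nat) \<Rightarrow> (nat \<times> nat) set" where
  "essential_star n \<pi> =
     (\<lambda>(i, j). if rank \<pi> i j = 1 then (i - 1, j - 1) else (i, j)) ` essential_set n \<pi>"

end

theory Submission
  imports Defs
begin


lemma dom_core:
  "\<forall>l::nat\<Rightarrow>nat. (\<forall>i k. 1 \<le> i \<longrightarrow> i \<le> k \<longrightarrow> l k \<le> l i) \<longrightarrow>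
     (\<forall>i. 1 \<le> i \<longrightarrow> i \<le> n \<longrightarrow> l i + i \<le> n) \<longrightarrow>
     (\<exists>\<sigma>. \<sigma> permutes {1..n} \<and> (\<forall>i j. 1 \<le> i \<longrightarrow> i \<le> n \<longrightarrow>
        ((1 \<le> j \<and> j < \<sigma> i \<and> (\<exists>r. i < r \<and> r \<le> n \<and> \<sigma> r = j)) \<longleftrightarrow> (1 \<le> j \<and> j \<le> l i))))"
proof (induction n)
  case 0
  then show ?case by (auto intro: permutes_id)
next
  case (Suc m)
  show ?case
  proof (intro allI impI)
    fix l :: "nat \<Rightarrow> nat"
    assume anti: "\<forall>i k. 1 \<le> i \<longrightarrow> i \<le> k \<longrightarrow> l k \<le> l i"
      and stair: "\<forall>i. 1 \<le> i \<longrightarrow> i \<le> Suc m \<longrightarrow> l i + i \<le> Suc m"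
    define l' where "l' = (\<lambda>i. l (Suc i))"
    have a': "\<forall>i k. 1 \<le> i \<longrightarrow> i \<le> k \<longrightarrow> l' k \<le> l' i" using anti by (simp add: l'_def)
    have s': "\<forall>i. 1 \<le> i \<longrightarrow> i \<le> m \<longrightarrow> l' i + i \<le> m" using stair by (auto simp: l'_def)
    obtain \<tau> where tp: "\<tau> permutes {1..m}" and tr: "\<forall>i j. 1 \<le> i \<longrightarrow> i \<le> m \<longrightarrow>
        ((1 \<le> j \<and> j < \<tau> i \<and> (\<exists>r. i < r \<and> r \<le> m \<and> \<tau> r = j)) \<longleftrightarrow> (1 \<le> j \<and> j \<le> l' i))"
      using spec[OF Suc.IH, of l'] a' s' by blast
    define mm where "mm = Suc (l 1)"
    have mm: "1 \<le> mm" "mm \<le> Suc m" using stair by (auto simp: mm_def)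
    have lmm: "\<And>i. 1 \<le> i \<Longrightarrow> l i < mm" using anti unfolding mm_def by (metis le_imp_less_Suc order_refl)
    define g where "g = (\<lambda>v::nat. if v < mm then v else Suc v)"
    define \<sigma> where "\<sigma> = (\<lambda>i. if i = 1 then mm else if 2 \<le> i \<and> i \<le> Suc m then g (\<tau> (i - 1)) else i)"
    have tin: "\<And>x. x \<in> {1..m} \<Longrightarrow> \<tau> x \<in> {1..m}" using permutes_in_image[OF tp] by blast
    have ginj: "\<And>a b. g a = g b \<Longrightarrow> a = b" by (auto simp: g_def split: if_splits)
    have gne: "\<And>v. g v \<noteq> mm" by (auto simp: g_def)
    have sin: "\<sigma> ` {1..Suc m} \<subseteq> {1..Suc m}"
    proof
      fix y assume "y \<in> \<sigma> ` {1..Suc m}"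
      then obtain x where x: "x \<in> {1..Suc m}" "y = \<sigma> x" by auto
      show "y \<in> {1..Suc m}"
      proof (cases "x = 1")
        case True then show ?thesis using x mm by (simp add: \<sigma>_def)
      next
        case False
        then have "x - 1 \<in> {1..m}" using x by auto
        then have "\<tau> (x - 1) \<in> {1..m}" by (rule tin)
        then show ?thesis using x False mm by (auto simp: \<sigma>_def g_def)
      qed
    qed
    have sinj: "inj_on \<sigma> {1..Suc m}"
    proof (rule inj_onI)
      fix x y assume x: "x \<in> {1..Suc m}" and y: "y \<in> {1..Suc m}" and e: "\<sigma> x = \<sigma> y"
      show "x = y"
      proof (cases "x = 1 \<or> y = 1")
        case True then show ?thesis using x y e gne by (auto simp: \<sigma>_def split: if_splits)
      next
        case False
        then have "g (\<tau> (x - 1)) = g (\<tau> (y - 1))" using x y e by (auto simp: \<sigma>_def)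
        then have "\<tau> (x - 1) = \<tau> (y - 1)" by (rule ginj)
        then have "x - 1 = y - 1" using tp by (metis permutes_inverses(2))
        then show ?thesis using False x y by auto
      qed
    qed
    have simg: "\<sigma> ` {1..Suc m} = {1..Suc m}"
      using sin sinj by (simp add: endo_inj_surj)
    have sp: "\<sigma> permutes {1..Suc m}"
    proof (rule bij_imp_permutes)
      show "bij_betw \<sigma> {1..Suc m} {1..Suc m}" using sinj simg by (simp add: bij_betw_def)
      fix x assume "x \<notin> {1..Suc m}" then show "\<sigma> x = x" by (auto simp: \<sigma>_def)
    qed
    have key: "(1 \<le> j \<and> j < \<sigma> i \<and> (\<exists>r. i < r \<and> r \<le> Suc m \<and> \<sigma> r = j)) \<longleftrightarrow> (1 \<le> j \<and> j \<le> l i)"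
      if i: "1 \<le> i" "i \<le> Suc m" for i j
    proof (cases "i = 1")
      case True
      show ?thesis
      proof
        assume "1 \<le> j \<and> j < \<sigma> i \<and> (\<exists>r. i < r \<and> r \<le> Suc m \<and> \<sigma> r = j)"
        then show "1 \<le> j \<and> j \<le> l i" using True by (simp add: \<sigma>_def mm_def)
      next
        assume h: "1 \<le> j \<and> j \<le> l i"
        then have "j \<in> {1..Suc m}" using stair True by auto
        then obtain r where r: "r \<in> {1..Suc m}" "\<sigma> r = j" using simg by (metis imageE)
        have "r \<noteq> 1" using r h True by (auto simp: \<sigma>_def mm_def)
        then show "1 \<le> j \<and> j < \<sigma> i \<and> (\<exists>r. i < r \<and> r \<le> Suc m \<and> \<sigma> r = j)"
          using h r True by (auto simp: \<sigma>_def mm_def)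
      qed
    next
      case False
      define i' where "i' = i - 1"
      have i': "1 \<le> i'" "i' \<le> m" "i = Suc i'" using i False by (auto simp: i'_def)
      have si: "\<sigma> i = g (\<tau> i')" using i' by (simp add: \<sigma>_def)
      have ex: "(\<exists>r. i < r \<and> r \<le> Suc m \<and> \<sigma> r = j) \<longleftrightarrow> (\<exists>r. i' < r \<and> r \<le> m \<and> g (\<tau> r) = j)"
      proof
        assume "\<exists>r. i < r \<and> r \<le> Suc m \<and> \<sigma> r = j"
        then obtain r where r: "i < r" "r \<le> Suc m" "\<sigma> r = j" by blast
        then show "\<exists>r. i' < r \<and> r \<le> m \<and> g (\<tau> r) = j"
          using i' by (intro exI[of _ "r - 1"]) (auto simp: \<sigma>_def)
      next
        assume "\<exists>r. i' < r \<and> r \<le> m \<and> g (\<tau> r) = j"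
        then obtain r where r: "i' < r" "r \<le> m" "g (\<tau> r) = j" by blast
        then show "\<exists>r. i < r \<and> r \<le> Suc m \<and> \<sigma> r = j"
          using i' by (intro exI[of _ "Suc r"]) (auto simp: \<sigma>_def)
      qed
      have li: "l i = l' i'" using i' by (simp add: l'_def)
      show ?thesis
      proof (cases "j = mm")
        case True
        then show ?thesis using gne ex lmm[of i] i by auto
      next
        case False
        define j' where "j' = (if j < mm then j else j - 1)"
        have gj: "\<And>v. g v = j \<longleftrightarrow> v = j'" using False by (auto simp: g_def j'_def)
        have lj: "\<And>v. j < g v \<longleftrightarrow> j' < v" using False by (auto simp: g_def j'_def)
        have "(1 \<le> j \<and> j < \<sigma> i \<and> (\<exists>r. i < r \<and> r \<le> Suc m \<and> \<sigma> r = j)) \<longleftrightarrow>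
              (1 \<le> j \<and> j' < \<tau> i' \<and> (\<exists>r. i' < r \<and> r \<le> m \<and> \<tau> r = j'))"
          using si ex gj lj by simp
        also have "\<dots> \<longleftrightarrow> (1 \<le> j \<and> 1 \<le> j' \<and> j' < \<tau> i' \<and> (\<exists>r. i' < r \<and> r \<le> m \<and> \<tau> r = j'))"
          using mm False by (auto simp: j'_def)
        also have "\<dots> \<longleftrightarrow> (1 \<le> j \<and> 1 \<le> j' \<and> j' \<le> l' i')" using tr[rule_format, OF i'(1) i'(2)] by blast
        also have "\<dots> \<longleftrightarrow> (1 \<le> j \<and> j \<le> l i)"
          using li lmm[of i] i False mm by (auto simp: j'_def)
        finally show ?thesis .
      qed
    qed
    show "\<exists>\<sigma>. \<sigma> permutes {1..Suc m} \<and> (\<forall>i j. 1 \<le> i \<longrightarrow> i \<le> Suc m \<longrightarrow>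
        ((1 \<le> j \<and> j < \<sigma> i \<and> (\<exists>r. i < r \<and> r \<le> Suc m \<and> \<sigma> r = j)) \<longleftrightarrow> (1 \<le> j \<and> j \<le> l i)))"
      using sp key by blast
  qed
qed



lemma p_in: assumes "\<pi> permutes S" "j \<in> S" shows "\<pi> j \<in> S"
  using permutes_in_image[OF assms(1)] assms(2) by simp

lemma inv_in: assumes "\<pi> permutes S" "j \<in> S" shows "inv \<pi> j \<in> S"
  using p_in[OF permutes_inv[OF assms(1)] assms(2)] .

lemma diag_char:
  assumes p: "\<sigma> permutes {1..n}"
  shows "(i, j) \<in> diagram n \<sigma> \<longleftrightarrow> (1 \<le> i \<and> i \<le> n \<and> 1 \<le> j \<and> j < \<sigma> i \<and> (\<exists>r. i < r \<and> r \<le> n \<and> \<sigma> r = j))"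
proof
  assume "(i, j) \<in> diagram n \<sigma>"
  then have h: "i \<in> {1..n}" "j \<in> {1..n}" "j < \<sigma> i" "i < inv \<sigma> j" by (auto simp: diagram_def)
  have "inv \<sigma> j \<in> {1..n}" using inv_in[OF p h(2)] .
  moreover have "\<sigma> (inv \<sigma> j) = j" using permutes_inverses(1)[OF p] .
  ultimately show "1 \<le> i \<and> i \<le> n \<and> 1 \<le> j \<and> j < \<sigma> i \<and> (\<exists>r. i < r \<and> r \<le> n \<and> \<sigma> r = j)"
    using h by auto
next
  assume h: "1 \<le> i \<and> i \<le> n \<and> 1 \<le> j \<and> j < \<sigma> i \<and> (\<exists>r. i < r \<and> r \<le> n \<and> \<sigma> r = j)"
  then obtain r where r: "i < r" "r \<le> n" "\<sigma> r = j" by blast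
  have "\<sigma> i \<in> {1..n}" using p_in[OF p] h by auto
  moreover have "inv \<sigma> j = r" using permutes_inv_eq[OF p] r by blast
  ultimately show "(i, j) \<in> diagram n \<sigma>" using h r by (auto simp: diagram_def)
qed

lemma dom_exists:
  fixes l :: "nat \<Rightarrow> nat"
  assumes "\<And>i k. 1 \<le> i \<Longrightarrow> i \<le> k \<Longrightarrow> l k \<le> l i"
    and "\<And>i. 1 \<le> i \<Longrightarrow> i \<le> n \<Longrightarrow> l i + i \<le> n"
  shows "\<exists>\<sigma>. \<sigma> permutes {1..n} \<and> (\<forall>i j. (i, j) \<in> diagram n \<sigma> \<longleftrightarrow> (1 \<le> i \<and> i \<le> n \<and> 1 \<le> j \<and> j \<le> l i))"
proof -
  have "(\<forall>i k. 1 \<le> i \<longrightarrow> i \<le> k \<longrightarrow> l k \<le> l i)" "(\<forall>i. 1 \<le> i \<longrightarrow> i \<le> n \<longrightarrow> l i + i \<le> n)"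
    using assms by auto
  then obtain \<sigma> where s: "\<sigma> permutes {1..n}" and d: "\<forall>i j. 1 \<le> i \<longrightarrow> i \<le> n \<longrightarrow>
        ((1 \<le> j \<and> j < \<sigma> i \<and> (\<exists>r. i < r \<and> r \<le> n \<and> \<sigma> r = j)) \<longleftrightarrow> (1 \<le> j \<and> j \<le> l i))"
    using spec[OF dom_core[of n], of l] by blast
  have "(i, j) \<in> diagram n \<sigma> \<longleftrightarrow> (1 \<le> i \<and> i \<le> n \<and> 1 \<le> j \<and> j \<le> l i)" for i j
  proof (cases "1 \<le> i \<and> i \<le> n")
    case True
    then have "((1 \<le> j \<and> j < \<sigma> i \<and> (\<exists>r. i < r \<and> r \<le> n \<and> \<sigma> r = j)) \<longleftrightarrow> (1 \<le> j \<and> j \<le> l i))"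
      using d by blast
    then show ?thesis using diag_char[OF s, of i j] True by simp
  next
    case False
    then show ?thesis using diag_char[OF s, of i j] by auto
  qed
  then show ?thesis using s by blast
qed

lemma ess_facts:
  assumes p: "\<pi> permutes {1..n}" and e: "(i, j) \<in> essential_set n \<pi>"
  shows "1 \<le> i" "i < n" "1 \<le> j" "j < n" "j < \<pi> i" "i < inv \<pi> j"
    "\<pi> (Suc i) \<le> j" "inv \<pi> (Suc j) \<le> i"
proof -
  have d: "i \<in> {1..n}" "j \<in> {1..n}" "j < \<pi> i" "i < inv \<pi> j"
    and n1: "(Suc i, j) \<notin> diagram n \<pi>" and n2: "(i, Suc j) \<notin> diagram n \<pi>"
    using e by (auto simp: essential_set_def diagram_def)
  have iv: "inv \<pi> j \<in> {1..n}" using inv_in[OF p d(2)] .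
  have pv: "\<pi> i \<in> {1..n}" using p_in[OF p d(1)] .
  show "1 \<le> i" "i < n" "1 \<le> j" "j < n" "j < \<pi> i" "i < inv \<pi> j" using d iv pv by auto
  show "\<pi> (Suc i) \<le> j"
  proof (rule ccontr)
    assume a: "\<not> \<pi> (Suc i) \<le> j"
    have "inv \<pi> j \<noteq> Suc i" using a permutes_inv_eq[OF p, of j "Suc i"] by auto
    then have "(Suc i, j) \<in> diagram n \<pi>" using a d iv by (auto simp: diagram_def)
    then show False using n1 by blast
  qed
  show "inv \<pi> (Suc j) \<le> i"
  proof (rule ccontr)
    assume a: "\<not> inv \<pi> (Suc j) \<le> i"
    have "\<pi> i \<noteq> Suc j" using a permutes_inv_eq[OF p, of "Suc j" i] by auto
    then have "(i, Suc j) \<in> diagram n \<pi>" using a d pv by (auto simp: diagram_def)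
    then show False using n2 by blast
  qed
qed

lemma card_plus1:
  assumes "finite B" "A \<subseteq> B" "x \<in> B" "x \<notin> A"
  shows "card A + 1 \<le> card B"
proof -
  have "card (insert x A) \<le> card B" using assms by (intro card_mono) auto
  moreover have "finite A" using assms finite_subset by blast
  ultimately show ?thesis using assms by simp
qed

lemma card_plus2:
  assumes "finite B" "A \<subseteq> B" "x \<in> B" "x \<notin> A" "y \<in> B" "y \<notin> A" "x \<noteq> y"
  shows "card A + 2 \<le> card B"
proof -
  have "card (insert x (insert y A)) \<le> card B" using assms by (intro card_mono) auto
  moreover have "finite A" using assms finite_subset by blast
  ultimately show ?thesis using assms by simp
qed

lemma rank_incr:
  assumes p: "\<pi> permutes {1..n}" and c: "(i, j) \<in> essential_set n \<pi>"
    and c': "(i', j') \<in> essential_set n \<pi>" and le: "i \<le> i'" "j \<le> j'"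
  shows "rank \<pi> i j + (if i < i' then 1 else 0) + (if j < j' then 1 else 0) \<le> rank \<pi> i' j'"
proof -
  note f = ess_facts[OF p c] and f' = ess_facts[OF p c']
  define A where "A = {k \<in> {1..<i}. \<pi> k < j}"
  define A' where "A' = {k \<in> {1..<i'}. \<pi> k < j'}"
  have fin: "finite A'" by (simp add: A'_def)
  have sub: "A \<subseteq> A'" using le by (auto simp: A_def A'_def)
  have x1: "Suc i \<in> A' \<and> Suc i \<notin> A" if "i < i'"
  proof -
    have "Suc i \<noteq> i'" using f(7) f'(5) le by auto
    moreover have "\<pi> (Suc i) \<noteq> j'"
    proof
      assume "\<pi> (Suc i) = j'"
      then have "inv \<pi> j' = Suc i" using permutes_inv_eq[OF p] by blast
      then show False using f'(6) that by auto
    qed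
    ultimately show ?thesis using that f(7) le by (auto simp: A_def A'_def)
  qed
  define k0 where "k0 = inv \<pi> (Suc j)"
  have k0: "\<pi> k0 = Suc j" using permutes_inverses(1)[OF p] by (simp add: k0_def)
  have k0r: "k0 \<in> {1..n}" unfolding k0_def using inv_in[OF p] f by auto
  have x2: "k0 \<in> A' \<and> k0 \<notin> A" if "j < j'"
  proof -
    have "inv \<pi> j' \<noteq> k0" using f'(6) f(8) le by (auto simp: k0_def)
    then have "j' \<noteq> Suc j" using k0_def by auto
    then have jj: "Suc j < j'" using that by auto
    have "k0 < i'"
    proof (cases "i < i'")
      case True then show ?thesis using f(8) by (simp add: k0_def)
    next
      case False
      then have "i = i'" using le by auto
      then have "k0 \<noteq> i" using k0 f'(5) jj by auto
      then show ?thesis using f(8) \<open>i = i'\<close> by (simp add: k0_def)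
    qed
    then show ?thesis using k0 k0r jj by (auto simp: A_def A'_def)
  qed
  have ne: "Suc i \<noteq> k0" using f(8) by (auto simp: k0_def)
  have ra: "rank \<pi> i j = card A" "rank \<pi> i' j' = card A'" by (simp_all add: rank_def A_def A'_def)
  show ?thesis
  proof (cases "i < i'")
    case True
    show ?thesis
    proof (cases "j < j'")
      case True
      then show ?thesis using card_plus2[OF fin sub] x1 x2 ne \<open>i < i'\<close> ra by auto
    next
      case False
      then show ?thesis using card_plus1[OF fin sub] x1 \<open>i < i'\<close> ra by auto
    qed
  next
    case False
    show ?thesis
    proof (cases "j < j'")
      case True
      then show ?thesis using card_plus1[OF fin sub] x2 False ra by auto
    next
      case False
      then show ?thesis using card_mono[OF fin sub] \<open>\<not> i < i'\<close> ra by auto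
    qed
  qed
qed

lemma diag_stair:
  assumes p: "\<pi> permutes {1..n}" and d: "(i, j) \<in> diagram n \<pi>"
  shows "i + j \<le> n + rank \<pi> i j"
proof -
  have h: "i \<in> {1..n}" "j \<in> {1..n}" "j < \<pi> i" "i < inv \<pi> j" using d by (auto simp: diagram_def)
  define A where "A = {k \<in> {1..<i}. \<pi> k < j}"
  define B where "B = {v \<in> {1..j}. i < inv \<pi> v}"
  have "{1..j} \<subseteq> B \<union> \<pi> ` A"
  proof
    fix v assume v: "v \<in> {1..j}"
    then have vn: "v \<in> {1..n}" using h by auto
    define k where "k = inv \<pi> v"
    have pk: "\<pi> k = v" using permutes_inverses(1)[OF p] by (simp add: k_def)
    have kr: "k \<in> {1..n}" using inv_in[OF p vn] by (simp add: k_def)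
    show "v \<in> B \<union> \<pi> ` A"
    proof (cases "i < k")
      case True then show ?thesis using v by (auto simp: B_def k_def)
    next
      case False
      have "k \<noteq> i" using pk h v by auto
      then have "k < i" using False by auto
      moreover have "v \<noteq> j" using \<open>k < i\<close> h(4) k_def by auto
      ultimately have "k \<in> A" using pk v kr by (auto simp: A_def)
      then show ?thesis using pk by blast
    qed
  qed
  then have c1: "j \<le> card (B \<union> \<pi> ` A)" using card_mono[of "B \<union> \<pi> ` A" "{1..j}"]
    by (simp add: A_def B_def)
  have c2: "card (B \<union> \<pi> ` A) \<le> card B + card (\<pi> ` A)" by (rule card_Un_le)
  have c3: "card (\<pi> ` A) \<le> card A" by (rule card_image_le) (simp add: A_def)
  have c4: "card B \<le> n - i"
  proof -
    have "inj_on (inv \<pi>) B" using permutes_inj_on[OF permutes_inv[OF p]] .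
    moreover have "inv \<pi> ` B \<subseteq> {i<..n}"
    proof
      fix x assume "x \<in> inv \<pi> ` B"
      then obtain v where v: "v \<in> B" "x = inv \<pi> v" by blast
      then have "v \<in> {1..n}" using h by (auto simp: B_def)
      then have "inv \<pi> v \<in> {1..n}" by (rule inv_in[OF p])
      then show "x \<in> {i<..n}" using v by (auto simp: B_def)
    qed
    ultimately have "card B \<le> card {i<..n}" by (rule card_inj_on_le) simp
    then show ?thesis by simp
  qed
  have "rank \<pi> i j = card A" by (simp add: rank_def A_def)
  then show ?thesis using c1 c2 c3 c4 h by auto
qed



lemma four_iff: "(a::nat) \<in> {1..4} \<longleftrightarrow> a = 1 \<or> a = 2 \<or> a = 3 \<or> a = 4" by auto

lemma rank_le1:
  assumes s: "schroeder n \<pi>" and d: "(i, j) \<in> diagram n \<pi>"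
  shows "rank \<pi> i j \<le> 1"
proof (rule ccontr)
  assume "\<not> rank \<pi> i j \<le> 1"
  then have c2: "2 \<le> card {k \<in> {1..<i}. \<pi> k < j}" by (simp add: rank_def)
  define A where "A = {k \<in> {1..<i}. \<pi> k < j}"
  have "\<exists>x y. x \<in> A \<and> y \<in> A \<and> x < y"
  proof (rule ccontr)
    assume "\<not> ?thesis"
    then have "\<forall>x\<in>A. \<forall>y\<in>A. x = y" by (metis linorder_neqE_nat)
    then have "card A \<le> 1" using card_le_Suc0_iff_eq[of A] by (simp add: A_def)
    then show False using c2 by (simp add: A_def)
  qed
  then obtain k1 k2 where k: "k1 \<in> A" "k2 \<in> A" "k1 < k2" by blast
  have p: "\<pi> permutes {1..n}" using s by (simp add: schroeder_def)
  have h: "i \<in> {1..n}" "j \<in> {1..n}" "j < \<pi> i" "i < inv \<pi> j" using d by (auto simp: diagram_def)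
  define dd where "dd = inv \<pi> j"
  have pd: "\<pi> dd = j" using permutes_inverses(1)[OF p] by (simp add: dd_def)
  have dn: "dd \<in> {1..n}" using inv_in[OF p h(2)] by (simp add: dd_def)
  have kk: "1 \<le> k1" "k1 < i" "\<pi> k1 < j" "1 \<le> k2" "k2 < i" "\<pi> k2 < j" using k by (auto simp: A_def)
  have neq: "\<pi> k1 \<noteq> \<pi> k2" using permutes_inj[OF p] k(3) by (metis inj_eq less_irrefl)
  define idx where "idx = (\<lambda>a::nat. if a = 1 then k1 else if a = 2 then k2 else if a = 3 then i else dd)"
  have sm: "strict_mono_on {1..4} idx"
    unfolding strict_mono_on_def four_iff idx_def using kk k(3) h dd_def by auto
  have im: "idx ` {1..4} \<subseteq> {1..n}"
    unfolding idx_def using kk h dn by auto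
  show False
  proof (cases "\<pi> k1 < \<pi> k2")
    case True
    have L: "length [1,2,4,3::nat] = (4::nat)" by simp
    have "\<forall>a\<in>{1..4}. \<forall>b\<in>{1..4}. \<pi> (idx a) < \<pi> (idx b) \<longleftrightarrow> [1,2,4,3::nat] ! (a - 1) < [1,2,4,3::nat] ! (b - 1)"
      unfolding four_iff idx_def using kk h pd True by auto
    then have "contains_pattern n \<pi> [1,2,4,3]"
      unfolding contains_pattern_def L using sm im by blast
    then show False using s by (simp add: schroeder_def avoids_def)
  next
    case False
    then have F: "\<pi> k2 < \<pi> k1" using neq by auto
    have L: "length [2,1,4,3::nat] = (4::nat)" by simp
    have "\<forall>a\<in>{1..4}. \<forall>b\<in>{1..4}. \<pi> (idx a) < \<pi> (idx b) \<longleftrightarrow> [2,1,4,3::nat] ! (a - 1) < [2,1,4,3::nat] ! (b - 1)"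
      unfolding four_iff idx_def using kk h pd F by auto
    then have "contains_pattern n \<pi> [2,1,4,3]"
      unfolding contains_pattern_def L using sm im by blast
    then show False using s by (simp add: schroeder_def avoids_def)
  qed
qed



lemma rank0_iff: "rank \<pi> i j = 0 \<longleftrightarrow> (\<forall>k. 1 \<le> k \<longrightarrow> k < i \<longrightarrow> \<not> \<pi> k < j)"
  by (auto simp: rank_def card_eq_0_iff)

theorem proposition2p6:
  fixes n :: nat and \<pi> :: "nat \<Rightarrow> nat"
  assumes "schroeder n \<pi>"
  shows "\<exists>\<sigma>. \<sigma> permutes {1..n} \<and> essential_set n \<sigma> = essential_star n \<pi> \<and>
           (\<forall>(i, j) \<in> essential_set n \<sigma>. rank \<sigma> i j = 0) \<and> avoids n \<sigma> [1,3,2]"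
proof -
  have p: "\<pi> permutes {1..n}" using assms by (simp add: schroeder_def)
  define f where "f = (\<lambda>(i::nat, j::nat). if rank \<pi> i j = 1 then (i - 1, j - 1) else (i, j))"
  define C where "C = essential_star n \<pi>"
  have Cdef: "C = f ` essential_set n \<pi>" by (simp add: C_def essential_star_def f_def)
  have ED: "\<And>i j. (i, j) \<in> essential_set n \<pi> \<Longrightarrow> (i, j) \<in> diagram n \<pi>"
    by (simp add: essential_set_def)
  have r01: "\<And>i j. (i, j) \<in> essential_set n \<pi> \<Longrightarrow> rank \<pi> i j = 0 \<or> rank \<pi> i j = 1"
    using rank_le1[OF assms] ED by fastforce
  have r1f: "2 \<le> i \<and> 2 \<le> j" if c: "(i, j) \<in> essential_set n \<pi>" and r: "rank \<pi> i j = 1" for i j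
  proof -
    obtain k where k: "1 \<le> k" "k < i" "\<pi> k < j" using r rank0_iff[of \<pi> i j] by auto
    have "k \<in> {1..n}" using k ess_facts[OF p c] by auto
    then have "\<pi> k \<in> {1..n}" by (rule p_in[OF p])
    then show ?thesis using k by auto
  qed
  have fv: "f (i, j) = (if rank \<pi> i j = 1 then (i - 1, j - 1) else (i, j))" for i j
    by (simp add: f_def)
  have P1: "1 \<le> a \<and> 1 \<le> b \<and> a + b \<le> n" if ab0: "(a, b) \<in> C" for a b
  proof -
    obtain i j where c: "(i, j) \<in> essential_set n \<pi>" and ab: "(a, b) = f (i, j)"
      using ab0 Cdef by auto
    have st: "i + j \<le> n + rank \<pi> i j" using diag_stair[OF p ED[OF c]] .
    have ef: "1 \<le> i" "1 \<le> j" using ess_facts[OF p c] by auto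
    show ?thesis
    proof (cases "rank \<pi> i j = 1")
      case True
      then show ?thesis using r1f[OF c True] ab st fv[of i j] by auto
    next
      case False
      then have "rank \<pi> i j = 0" using r01[OF c] by auto
      then show ?thesis using False ab st ef fv[of i j] by auto
    qed
  qed
  have P2: "x = y" if xy: "x \<in> C" "y \<in> C" "fst x \<le> fst y" "snd x \<le> snd y" for x y
  proof -
    obtain i j where c: "(i, j) \<in> essential_set n \<pi>" and xd: "x = f (i, j)"
      using xy(1) Cdef by auto
    obtain i' j' where c': "(i', j') \<in> essential_set n \<pi>" and yd: "y = f (i', j')"
      using xy(2) Cdef by auto
    show "x = y"
    proof (rule ccontr)
      assume ne: "x \<noteq> y"
      then have cne: "(i, j) \<noteq> (i', j')" using xd yd by auto
      note F = ess_facts[OF p c] and F' = ess_facts[OF p c']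
      have RI: "i \<le> i' \<Longrightarrow> j \<le> j' \<Longrightarrow>
        rank \<pi> i j + (if i < i' then 1 else 0) + (if j < j' then 1 else 0) \<le> rank \<pi> i' j'"
        using rank_incr[OF p c c'] by blast
      consider "rank \<pi> i j = 0" "rank \<pi> i' j' = 0" | "rank \<pi> i j = 1" "rank \<pi> i' j' = 1"
        | "rank \<pi> i j = 0" "rank \<pi> i' j' = 1" | "rank \<pi> i j = 1" "rank \<pi> i' j' = 0"
        using r01[OF c] r01[OF c'] by argo
      then show False
      proof cases
        case 1
        then have "i \<le> i'" "j \<le> j'" using xy xd yd fv by auto
        then show False using RI cne 1 by (auto split: if_splits)
      next
        case 2
        have "i \<le> i'" "j \<le> j'" using xy xd yd fv 2 r1f[OF c] r1f[OF c'] by auto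
        then show False using RI cne 2 by (auto split: if_splits)
      next
        case 3
        have "i < i'" "j < j'" using xy xd yd fv 3 r1f[OF c'] by auto
        then show False using RI 3 by auto
      next
        case 4
        have le: "i - 1 \<le> i'" "j - 1 \<le> j'" using xy xd yd fv 4 by auto
        have ij2: "2 \<le> i" "2 \<le> j" using r1f[OF c] 4 by auto
        show False
        proof (cases "i \<le> i' \<and> j \<le> j'")
          case True
          then show False using RI 4 by auto
        next
          case False
          show False
          proof (cases "i = Suc i'")
            case True
            have "j < j'" using F(5) F'(7) True by auto
            have "rank \<pi> i j = 0"
              unfolding rank0_iff
            proof (intro allI impI)
              fix k assume k: "1 \<le> k" "k < i"
              show "\<not> \<pi> k < j"
              proof
                assume pk: "\<pi> k < j"
                have "k \<noteq> i'" using pk F'(5) \<open>j < j'\<close> by auto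
                then have "k < i'" using k True by auto
                then show False using 4(2) k pk \<open>j < j'\<close> rank0_iff[of \<pi> i' j'] by auto
              qed
            qed
            then show False using 4 by simp
          next
            case False
            then have "i \<le> i'" "j = Suc j'" using le ij2 \<open>\<not> (i \<le> i' \<and> j \<le> j')\<close> by auto
            obtain k where k: "1 \<le> k" "k < i" "\<pi> k < j" using 4(1) rank0_iff[of \<pi> i j] by auto
            have "\<pi> k \<noteq> j'"
            proof
              assume "\<pi> k = j'"
              then have "inv \<pi> j' = k" using permutes_inv_eq[OF p] by blast
              then show False using F'(6) k \<open>i \<le> i'\<close> by auto
            qed
            then have "\<pi> k < j'" using k \<open>j = Suc j'\<close> by auto
            then show False using 4(2) k \<open>i \<le> i'\<close> rank0_iff[of \<pi> i' j'] by auto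
          qed
        qed
      qed
    qed
  qed
  have finC: "finite C"
  proof -
    have "essential_set n \<pi> \<subseteq> {1..n} \<times> {1..n}" by (auto simp: essential_set_def diagram_def)
    then have "finite (essential_set n \<pi>)" by (rule finite_subset) simp
    then show ?thesis using Cdef by simp
  qed
  define S where "S i = {b. \<exists>a. (a, b) \<in> C \<and> i \<le> a}" for i
  define l where "l i = Max (insert 0 (S i))" for i
  have finS: "finite (S i)" for i
  proof -
    have "S i \<subseteq> snd ` C" by (force simp: S_def)
    then show ?thesis using finC finite_subset by blast
  qed
  have lchar: "j \<le> l i \<longleftrightarrow> (\<exists>a b. (a, b) \<in> C \<and> i \<le> a \<and> j \<le> b)" if "1 \<le> j" for i j
  proof -
    have "j \<le> l i \<longleftrightarrow> (\<exists>x\<in>insert 0 (S i). j \<le> x)"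
      unfolding l_def using finS by (simp add: Max_ge_iff)
    then show ?thesis using that by (auto simp: S_def)
  qed
  have anti: "l k \<le> l i" if "1 \<le> i" "i \<le> k" for i k
  proof (cases "l k = 0")
    case True then show ?thesis by simp
  next
    case False
    then obtain a b where "(a, b) \<in> C" "k \<le> a" "l k \<le> b" using lchar[of "l k" k] by auto
    then have "\<exists>a b. (a, b) \<in> C \<and> i \<le> a \<and> l k \<le> b" using that(2) le_trans by blast
    then show ?thesis using lchar[of "l k" i] False by simp
  qed
  have stair: "l i + i \<le> n" if "1 \<le> i" "i \<le> n" for i
  proof (cases "l i = 0")
    case True then show ?thesis using that by simp
  next
    case False
    then obtain a b where "(a, b) \<in> C" "i \<le> a" "l i \<le> b" using lchar[of "l i" i] by auto
    then show ?thesis using P1 by fastforce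
  qed
  obtain \<sigma> where sp: "\<sigma> permutes {1..n}"
    and sd: "\<And>i j. (i, j) \<in> diagram n \<sigma> \<longleftrightarrow> (1 \<le> i \<and> i \<le> n \<and> 1 \<le> j \<and> j \<le> l i)"
    using dom_exists[of l n] anti stair by blast
  have D: "(i, j) \<in> diagram n \<sigma> \<longleftrightarrow> (1 \<le> i \<and> 1 \<le> j \<and> (\<exists>a b. (a, b) \<in> C \<and> i \<le> a \<and> j \<le> b))" for i j
  proof
    assume "(i, j) \<in> diagram n \<sigma>"
    then show "1 \<le> i \<and> 1 \<le> j \<and> (\<exists>a b. (a, b) \<in> C \<and> i \<le> a \<and> j \<le> b)" using sd lchar by blast
  next
    assume h: "1 \<le> i \<and> 1 \<le> j \<and> (\<exists>a b. (a, b) \<in> C \<and> i \<le> a \<and> j \<le> b)"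
    then obtain a b where ab: "(a, b) \<in> C" "i \<le> a" "j \<le> b" by blast
    have "i \<le> n" using P1[OF ab(1)] ab by auto
    then show "(i, j) \<in> diagram n \<sigma>" using sd lchar h by blast
  qed
  have down: "(i', j') \<in> diagram n \<sigma>"
    if "(i, j) \<in> diagram n \<sigma>" "1 \<le> i'" "i' \<le> i" "1 \<le> j'" "j' \<le> j" for i j i' j'
    using that D by (meson order_trans)
  have E: "essential_set n \<sigma> = C"
  proof
    show "essential_set n \<sigma> \<subseteq> C"
    proof
      fix x assume x: "x \<in> essential_set n \<sigma>"
      obtain i j where xij: "x = (i, j)" by fastforce
      have h: "(i, j) \<in> diagram n \<sigma>" "(Suc i, j) \<notin> diagram n \<sigma>" "(i, Suc j) \<notin> diagram n \<sigma>"
        using x xij by (auto simp: essential_set_def)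
      obtain a b where ab: "(a, b) \<in> C" "i \<le> a" "j \<le> b" "1 \<le> i" "1 \<le> j" using h(1) D by blast
      have "a = i" using h(2) ab D[of "Suc i" j] by (metis Suc_leI le_SucI le_antisym not_less)
      moreover have "b = j" using h(3) ab D[of i "Suc j"] by (metis Suc_leI le_SucI le_antisym not_less)
      ultimately show "x \<in> C" using ab xij by simp
    qed
  next
    show "C \<subseteq> essential_set n \<sigma>"
    proof
      fix x assume x: "x \<in> C"
      obtain i j where xij: "x = (i, j)" by fastforce
      have ij: "(i, j) \<in> C" using x xij by simp
      have d: "(i, j) \<in> diagram n \<sigma>" using D P1[OF ij] ij by blast
      have n1: "(Suc i, j) \<notin> diagram n \<sigma>"
      proof
        assume "(Suc i, j) \<in> diagram n \<sigma>"
        then obtain a b where "(a, b) \<in> C" "Suc i \<le> a" "j \<le> b" using D by blast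
        then show False using P2[of "(i, j)" "(a, b)"] ij by auto
      qed
      have n2: "(i, Suc j) \<notin> diagram n \<sigma>"
      proof
        assume "(i, Suc j) \<in> diagram n \<sigma>"
        then obtain a b where "(a, b) \<in> C" "i \<le> a" "Suc j \<le> b" using D by blast
        then show False using P2[of "(i, j)" "(a, b)"] ij by auto
      qed
      show "x \<in> essential_set n \<sigma>" using d n1 n2 xij by (simp add: essential_set_def)
    qed
  qed
  have R: "\<forall>(i, j) \<in> essential_set n \<sigma>. rank \<sigma> i j = 0"
  proof (clarify)
    fix i j assume e: "(i, j) \<in> essential_set n \<sigma>"
    then have d: "(i, j) \<in> diagram n \<sigma>" by (simp add: essential_set_def)
    then have i: "i \<le> n" by (simp add: diagram_def)
    show "rank \<sigma> i j = 0"
      unfolding rank0_iff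
    proof (intro allI impI notI)
      fix k assume k: "1 \<le> k" "k < i" "\<sigma> k < j"
      have "k \<in> {1..n}" using k i by auto
      then have "\<sigma> k \<in> {1..n}" by (rule p_in[OF sp])
      then have "(k, \<sigma> k) \<in> diagram n \<sigma>" using down[OF d, of k "\<sigma> k"] k by auto
      then show False by (simp add: diagram_def)
    qed
  qed
  have A: "avoids n \<sigma> [1,3,2]"
    unfolding avoids_def contains_pattern_def
  proof
    assume "\<exists>idx. strict_mono_on {1..length [1,3,2::nat]} idx \<and> idx ` {1..length [1,3,2::nat]} \<subseteq> {1..n} \<and>
        (\<forall>a\<in>{1..length [1,3,2::nat]}. \<forall>b\<in>{1..length [1,3,2::nat]}.
            \<sigma> (idx a) < \<sigma> (idx b) \<longleftrightarrow> [1,3,2::nat] ! (a - 1) < [1,3,2::nat] ! (b - 1))"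
    then obtain idx where sm: "strict_mono_on {1..3} idx" and im: "idx ` {1..3} \<subseteq> {1..n}"
      and o: "\<forall>a\<in>{1..3}. \<forall>b\<in>{1..3}. \<sigma> (idx a) < \<sigma> (idx b) \<longleftrightarrow> [1,3,2::nat] ! (a - 1) < [1,3,2::nat] ! (b - 1)"
      by (auto simp: numeral_3_eq_3)
    have a12: "idx 1 < idx 2" "idx 2 < idx 3" using sm by (auto simp: strict_mono_on_def)
    have ins: "idx 1 \<in> {1..n}" "idx 2 \<in> {1..n}" "idx 3 \<in> {1..n}" using im[unfolded image_subset_iff] by (simp_all add: numeral_3_eq_3)
    have o1: "\<sigma> (idx 1) < \<sigma> (idx 3)" using o by (auto dest: bspec[of _ _ 1])
    have o2: "\<sigma> (idx 3) < \<sigma> (idx 2)" using o by (auto dest: bspec[of _ _ 3])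
    have v: "\<sigma> (idx 1) \<in> {1..n}" "\<sigma> (idx 3) \<in> {1..n}" using ins p_in[OF sp] by auto
    have "inv \<sigma> (\<sigma> (idx 3)) = idx 3" using permutes_inverses(2)[OF sp] .
    then have "(idx 2, \<sigma> (idx 3)) \<in> diagram n \<sigma>" using ins v o2 a12 by (auto simp: diagram_def)
    then have "(idx 1, \<sigma> (idx 1)) \<in> diagram n \<sigma>" using down ins v o1 a12
      by (meson atLeastAtMost_iff less_imp_le)
    then show False by (simp add: diagram_def)
  qed
  show ?thesis using sp E R A unfolding C_def by blast
qed

end
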